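(* Let $n\ge 2$ and let $P=[p_1,\ldots,p_n]$ be an arithmetically progressed permutation with ratio $k$ such that $p_1\notin\{1,k+1,n\}$. Then the associated ternary string $\mathsf{T}_P$ is the unique string of length $n$ over $\{\mathtt{a},\mathtt{b},\mathtt{c}\}$ whose suffix array is $P$.
   Context: Alphabet $\{\mathtt{a}<\mathtt{b}<\mathtt{c}\}$, lexicographic order with a proper prefix smaller than the longer string; suffix array $\mathsf{SA}_{\mathsf{T}}$: permutation of $[1..n]$ such that $\mathsf{T}[\mathsf{SA}_{\mathsf{T}}[i]..n]$ is the $i$-th smallest suffix. $x\bmod n$ denotes the representative of $x$ modulo $n$ in $[1..n]$. An arithmetically progressed permutation of length $n$ with ratio $k\in[1..n-1]$ is a permutation $P=[p_1,\ldots,p_n]$ of $[1..n]$ with $p_{i+1}=p_i+k\bmod n$. Ternary string associated with $P$: cut $P$ immediately after the entry $n-k$ and immediately after the entry $(p_1-k-1)\bmod n$, giving consecutive possibly empty blocks $A,B,C$ with $P=ABC$; set $\mathsf{T}_P[p_i]=\mathtt{a},\mathtt{b},\mathtt{c}$ according as $p_i$ lies in $A$, $B$, $C$. *)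

theory Defs
  imports Main
begin

text \<open>Letters a < b < c are encoded as the natural numbers 0 < 1 < 2.
  Strings are lists; position j (1-indexed) is S ! (j - 1).
  A permutation P = [p_1,...,p_n] is a list with P ! (i - 1) = p_i.\<close>

definition ternary :: "nat list \<Rightarrow> bool" where
  "ternary S \<longleftrightarrow> set S \<subseteq> {0, 1, 2}"

definition modn :: "int \<Rightarrow> nat \<Rightarrow> nat" where
  "modn x n = nat ((x - 1) mod int n + 1)"

definition suffix_at :: "nat list \<Rightarrow> nat \<Rightarrow> nat list" where
  "suffix_at S j = drop (j - 1) S"

definition is_suffix_array :: "nat list \<Rightarrow> nat list \<Rightarrow> bool" where
  "is_suffix_array S P \<longleftrightarrow>
     length P = length S \<and> distinct P \<and> set P = {1..length S} \<and>
     (\<forall>i. Suc i < length P \<longrightarrow>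
        ord_class.lexordp (suffix_at S (P ! i)) (suffix_at S (P ! Suc i)))"

definition is_perm :: "nat list \<Rightarrow> bool" where
  "is_perm P \<longleftrightarrow> distinct P \<and> set P = {1..length P}"

definition arith_prog_perm :: "nat list \<Rightarrow> nat \<Rightarrow> bool" where
  "arith_prog_perm P k \<longleftrightarrow> is_perm P \<and> 1 \<le> k \<and> k \<le> length P - 1 \<and>
     (\<forall>i. Suc i < length P \<longrightarrow> P ! Suc i = modn (int (P ! i) + int k) (length P))"

definition pos :: "nat list \<Rightarrow> nat \<Rightarrow> nat" where
  "pos P j = (LEAST i. i < length P \<and> P ! i = j)"

text \<open>Ternary string associated with P: cut P immediately after the entry n - k
  and immediately after the entry (p_1 - k - 1) mod n, giving blocks A, B, C;
  entries in A get a (=0), in B get b (=1), in C get c (=2).\<close>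
definition assoc_string :: "nat list \<Rightarrow> nat \<Rightarrow> nat list" where
  "assoc_string P k =
    (let n = length P;
         i1 = pos P (n - k);
         i2 = pos P (modn (int (hd P) - int k - 1) n);
         c1 = min i1 i2; c2 = max i1 i2
     in map (\<lambda>j. if pos P j \<le> c1 then 0 else if pos P j \<le> c2 then 1 else 2) [1..<n+1])"

end

theory Submission
  imports Defs
begin


lemma suffix_cons:
  assumes "1 \<le> a" "a \<le> length S"
  shows "suffix_at S a = S!(a-1) # suffix_at S (a+1)"
  using assms unfolding suffix_at_def
  by (metis Cons_nth_drop_Suc One_nat_def Suc_pred add.commute diff_Suc_1 le_eq_less_or_eq less_eq_Suc_le plus_1_eq_Suc zero_less_one)

lemma suffix_last: "suffix_at S (length S + 1) = []"
  unfolding suffix_at_def by auto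

lemma suffix_ne: "a \<le> length S \<Longrightarrow> suffix_at S (a+1) \<noteq> [] \<longleftrightarrow> a < length S"
  unfolding suffix_at_def by auto

lemma rank_lex:
  fixes S :: "nat list" and r :: "nat \<Rightarrow> nat"
  assumes H: "\<And>a b. a \<in> {1..length S} \<Longrightarrow> b \<in> {1..length S} \<Longrightarrow> r a < r b \<Longrightarrow>
     S!(a-1) < S!(b-1) \<or> (S!(a-1) = S!(b-1) \<and> (a = length S \<or> (a < length S \<and> b < length S \<and> r (a+1) < r (b+1))))"
  shows "a \<in> {1..length S} \<Longrightarrow> b \<in> {1..length S} \<Longrightarrow> r a < r b \<Longrightarrow> ord_class.lexordp (suffix_at S a) (suffix_at S b)"
proof (induction "length S - a" arbitrary: a b rule: less_induct)
  case less
  have sa: "suffix_at S a = S!(a-1) # suffix_at S (a+1)" using less.prems by (intro suffix_cons) auto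
  have sb: "suffix_at S b = S!(b-1) # suffix_at S (b+1)" using less.prems by (intro suffix_cons) auto
  from H[OF less.prems] consider "S!(a-1) < S!(b-1)" | "S!(a-1) = S!(b-1)" "a = length S"
    | "S!(a-1) = S!(b-1)" "a < length S" "b < length S" "r (a+1) < r (b+1)" by blast
  then show ?case
  proof cases
    case 1 then show ?thesis by (simp add: sa sb)
  next
    case 2
    have "a \<noteq> b" using less.prems by auto
    then have "b < length S" using 2 less.prems by auto
    then have "suffix_at S (b+1) \<noteq> []" using suffix_ne[of b S] by auto
    moreover have "suffix_at S (a+1) = []" using 2 suffix_last by simp
    ultimately show ?thesis unfolding sa sb using 2(1) by simp
  next
    case 3
    have "ord_class.lexordp (suffix_at S (a+1)) (suffix_at S (b+1))"
      using 3 less.prems by (intro less.hyps) auto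
    then show ?thesis using 3 by (simp add: sa sb)
  qed
qed



lemma modn_int: "n > 0 \<Longrightarrow> int (modn x n) = (x - 1) mod int n + 1"
  unfolding modn_def by simp

lemma modn_range: "n > 0 \<Longrightarrow> modn x n \<in> {1..n}"
proof -
  assume "n > 0"
  have "(x - 1) mod int n < int n" "(x-1) mod int n \<ge> 0" using \<open>n>0\<close> by auto
  then show ?thesis using modn_int[OF \<open>n>0\<close>, of x] by auto
qed

lemma modn_dvd: "n > 0 \<Longrightarrow> int n dvd (int (modn x n) - x)"
proof -
  assume "n > 0"
  have "int (modn x n) - x = (x - 1) mod int n - (x - 1)" using modn_int[OF \<open>n>0\<close>] by simp
  also have "\<dots> = - (int n * ((x-1) div int n))" by (simp add: minus_div_mult_eq_mod[symmetric])
  finally show ?thesis by simp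
qed

lemma dvd_small_eq:
  fixes a b :: int
  assumes "n dvd (a - b)" "1 \<le> a" "a \<le> n" "1 \<le> b" "b \<le> n"
  shows "a = b"
proof (rule ccontr)
  assume "a \<noteq> b"
  then have "\<bar>n\<bar> \<le> \<bar>a - b\<bar>" using dvd_imp_le_int assms(1) by auto
  then show False using assms by auto
qed

locale AP =
  fixes P :: "nat list" and k :: nat
  assumes len: "length P \<ge> 2" and ap: "arith_prog_perm P k" and hdP: "hd P \<notin> {1, k+1, length P}"
begin

abbreviation "n \<equiv> length P"
abbreviation "p1 \<equiv> P ! 0"

lemma hd_eq: "hd P = p1" using len by (cases P) auto

lemma dist: "distinct P" and setP: "set P = {1..n}" and k1: "1 \<le> k" and kn: "k < n"
  and recur: "\<And>i. Suc i < n \<Longrightarrow> P ! Suc i = modn (int (P ! i) + int k) n"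
  using ap len unfolding arith_prog_perm_def is_perm_def by auto

lemma npos: "n > 0" using len by auto

lemma nth_P: "i < n \<Longrightarrow> P ! i = modn (int p1 + int i * int k) n"
proof (induction i)
  case 0
  have "p1 \<in> {1..n}" using setP npos by (metis nth_mem)
  then show ?case using modn_int[OF npos, of "int p1"] by (simp add: modn_def)
next
  case (Suc i)
  have "P ! Suc i = modn (int (P ! i) + int k) n" using recur Suc by auto
  also have "\<dots> = modn (int p1 + int (Suc i) * int k) n"
  proof -
    have e: "int (P ! i) = (int p1 + int i * int k - 1) mod int n + 1"
      using Suc modn_int[OF npos] by simp
    have "((int p1 + int i * int k - 1) mod int n + 1 + int k - 1) mod int n
        = (int p1 + int i * int k - 1 + int k) mod int n"
      by (simp add: mod_add_left_eq)
    then show ?thesis unfolding modn_def e by (simp add: algebra_simps)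
  qed
  finally show ?case .
qed

lemma P_in: "i < n \<Longrightarrow> P ! i \<in> {1..n}" using setP nth_mem by blast

lemma char: "v \<in> {1..n} \<Longrightarrow> i < n \<Longrightarrow> P ! i = v \<longleftrightarrow> int n dvd (int i * int k - (int v - int p1))"
proof -
  assume v: "v \<in> {1..n}" and i: "i < n"
  have d: "int n dvd (int (P ! i) - (int p1 + int i * int k))"
    using nth_P[OF i] modn_dvd[OF npos] by simp
  show ?thesis
  proof
    assume "P ! i = v" then show "int n dvd (int i * int k - (int v - int p1))"
      using d by (smt (verit) dvd_minus_iff)
  next
    assume h: "int n dvd (int i * int k - (int v - int p1))"
    have "int n dvd (int (P ! i) - int v)"
      using dvd_add[OF d h] by (simp add: algebra_simps)
    then show "P ! i = v" using dvd_small_eq[of "int n" "int (P!i)" "int v"] P_in[OF i] v by auto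
  qed
qed

definition r where "r v = pos P v"

lemma pos_nth: "i < n \<Longrightarrow> r (P ! i) = i"
  unfolding r_def pos_def
  by (rule Least_equality) (auto simp: nth_eq_iff_index_eq[OF dist] le_eq_less_or_eq)

lemma r_prop: "v \<in> {1..n} \<Longrightarrow> r v < n \<and> P ! (r v) = v"
proof -
  assume "v \<in> {1..n}"
  then obtain i where "i < n" "P ! i = v" using setP by (metis in_set_conv_nth)
  then show ?thesis using pos_nth by auto
qed

lemma r_eq: "v \<in> {1..n} \<Longrightarrow> i < n \<Longrightarrow> int n dvd (int i * int k - (int v - int p1)) \<Longrightarrow> r v = i"
  using char pos_nth by metis

lemma r_dvd: "v \<in> {1..n} \<Longrightarrow> int n dvd (int (r v) * int k - (int v - int p1))"
  using char r_prop by blast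

lemma r_inj: "v \<in> {1..n} \<Longrightarrow> w \<in> {1..n} \<Longrightarrow> r v = r w \<Longrightarrow> v = w"
  using r_prop by metis

lemma p1_range: "2 \<le> p1" "p1 < n"
proof -
  have "p1 \<in> {1..n}" using P_in npos by blast
  then show "2 \<le> p1" "p1 < n" using hdP hd_eq by auto
qed

lemma r_p1: "r p1 = 0" using pos_nth npos by auto

definition m where "m = r (p1 + 1)"

lemma m_prop: "m < n" "int n dvd (int m * int k - 1)"
  using r_prop[of "p1+1"] r_dvd[of "p1+1"] p1_range unfolding m_def by auto

lemma m_pos: "m > 0"
proof (rule ccontr)
  assume "\<not> m > 0" then have "int n dvd 1" using m_prop by simp
  then show False using len by simp
qed

end

context AP begin

lemma r_succ: "1 \<le> v \<Longrightarrow> v < n \<Longrightarrow> r (v+1) = (r v + m) mod n"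
proof -
  assume v: "1 \<le> v" "v < n"
  define q where "q = (r v + m) div n"
  have h: "int (r v + m) = int n * int q + int ((r v + m) mod n)"
    unfolding q_def of_nat_mult[symmetric] of_nat_add[symmetric] mult_div_mod_eq ..
  have iq: "int ((r v + m) mod n) = int (r v) + int m - int n * int q"
    using h by simp
  have e: "int ((r v + m) mod n) * int k - (int (v+1) - int p1)
      = (int (r v) * int k - (int v - int p1)) + (int m * int k - 1) - int n * (int q * int k)"
    unfolding iq by (simp add: algebra_simps)
  have vr: "v \<in> {1..n}" using v by auto
  show ?thesis
  proof (rule r_eq)
    show "v + 1 \<in> {1..n}" using v by auto
    show "(r v + m) mod n < n" using npos by simp
    show "int n dvd int ((r v + m) mod n) * int k - (int (v + 1) - int p1)"
      unfolding e by (rule dvd_diff[OF dvd_add[OF r_dvd[OF vr] m_prop(2)] dvd_triv_left])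
  qed
qed

lemma n_in: "n \<in> {1..n}" using len by auto

lemma p1_in: "p1 \<in> {1..n}" using P_in npos by blast

lemma rn_pos: "r n \<ge> 1"
proof (rule ccontr)
  assume "\<not> r n \<ge> 1" then have "r n = r p1" using r_p1 by simp
  then have "n = p1" using r_inj[OF n_in p1_in] by blast
  then show False using p1_range by simp
qed

lemma rn_lt: "r n < n" using r_prop[OF n_in] by blast

lemma i1_eq: "r (n - k) = r n - 1"
proof (rule r_eq)
  show "n - k \<in> {1..n}" using kn k1 by auto
  show "r n - 1 < n" using rn_lt by auto
  have e: "int (r n - 1) * int k - (int (n - k) - int p1) = (int (r n) * int k - (int n - int p1))"
    using rn_pos kn by (simp add: of_nat_diff algebra_simps)
  show "int n dvd (int (r n - 1) * int k - (int (n - k) - int p1))"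
    unfolding e by (rule r_dvd[OF n_in])
qed

definition w where "w = modn (int p1 - int k - 1) n"

lemma w_range: "w \<in> {1..n}" unfolding w_def using modn_range npos by blast

lemma w_r: "r w = n - m - 1"
proof (rule r_eq[OF w_range])
  show "n - m - 1 < n" using m_prop by auto
  have d: "int n dvd (int w - (int p1 - int k - 1))" unfolding w_def using modn_dvd npos by blast
  have e: "int (n - m - 1) * int k - (int w - int p1)
     = int n * int k - (int m * int k - 1) - (int w - (int p1 - int k - 1))"
    using m_prop m_pos by (simp add: of_nat_diff algebra_simps)
  show "int n dvd (int (n - m - 1) * int k - (int w - int p1))"
    unfolding e by (rule dvd_diff[OF dvd_diff[OF dvd_triv_left m_prop(2)] d])
qed

lemma p1m_r: "r (p1 - 1) = n - m"
proof (rule r_eq)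
  show "p1 - 1 \<in> {1..n}" using p1_range by auto
  show "n - m < n" using m_pos m_prop by auto
  have e: "int (n - m) * int k - (int (p1 - 1) - int p1) = int n * int k - (int m * int k - 1)"
    using m_prop p1_range by (simp add: of_nat_diff algebra_simps)
  show "int n dvd (int (n - m) * int k - (int (p1 - 1) - int p1))"
    unfolding e by (rule dvd_diff[OF dvd_triv_left m_prop(2)])
qed

lemma w_ne_n: "w \<noteq> n"
proof
  assume "w = n"
  then have d: "int n dvd (int n - (int p1 - int k - 1))" using modn_dvd[OF npos, of "int p1 - int k - 1"] unfolding w_def by simp
  have dd: "int n dvd (int p1 - int k - 1)" using dvd_diff[OF dvd_refl d] by (simp add: algebra_simps)
  have lt: "\<bar>int p1 - int k - 1\<bar> < int n" using p1_range kn k1 by auto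
  have "int p1 - int k - 1 = 0"
  proof (rule ccontr)
    assume "int p1 - int k - 1 \<noteq> 0"
    from dvd_imp_le_int[OF this dd] lt show False by simp
  qed
  then show False using hdP hd_eq by auto
qed

lemma i12: "r n - 1 \<noteq> n - m - 1"
proof
  assume "r n - 1 = n - m - 1"
  then have "r n = r (p1 - 1)" using rn_pos m_prop m_pos p1m_r by auto
  moreover have "p1 - 1 \<in> {1..n}" using p1_range by auto
  ultimately have "n = p1 - 1" using r_inj[OF n_in] by blast
  then show False using p1_range by auto
qed

lemma rn_ne_w: "r n \<noteq> r w" using r_inj[OF n_in w_range] w_ne_n by auto

end

context AP begin

definition c1 where "c1 = min (r n - 1) (n - m - 1)"
definition c2 where "c2 = max (r n - 1) (n - m - 1)"
definition f :: "nat \<Rightarrow> nat" where "f i = (if i \<le> c1 then 0 else if i \<le> c2 then 1 else 2)"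

lemma c12: "c1 < c2" "c2 + 1 < n"
  using i12 rn_lt m_pos m_prop rn_pos unfolding c1_def c2_def by auto

lemma cuts: "r n - 1 = c1 \<or> r n - 1 = c2" "n - m - 1 = c1 \<or> n - m - 1 = c2"
  unfolding c1_def c2_def by auto

lemma f_block: "x < y \<Longrightarrow> f x = f y \<Longrightarrow> c \<in> {c1, c2} \<Longrightarrow> x \<le> c \<Longrightarrow> c < y \<Longrightarrow> False"
  using c12 unfolding f_def by (auto split: if_splits)

lemma f_mono: "x \<le> y \<Longrightarrow> f x \<le> f y" unfolding f_def by auto

lemma mod2: "x < 2 * n \<Longrightarrow> x mod n = (if x < n then x else x - n)"
  by (simp add: mod_if le_mod_geq)

abbreviation "T \<equiv> assoc_string P k"

lemma T_eq: "T = map (\<lambda>j. f (r j)) [1..<n+1]"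
proof -
  have e1: "pos P (n - k) = pos P n - 1" using i1_eq unfolding r_def .
  have e2: "pos P (modn (int (hd P) - int k - 1) n) = n - m - 1"
    using w_r unfolding r_def w_def hd_eq .
  show ?thesis
    unfolding assoc_string_def Let_def e1 e2 f_def c1_def c2_def r_def by (rule refl)
qed

lemma T_len: "length T = n" unfolding T_eq using len by auto

lemma T_nth: "j \<in> {1..n} \<Longrightarrow> T ! (j - 1) = f (r j)"
  unfolding T_eq by (auto simp del: upt_Suc)

lemma T_tern: "ternary T" unfolding T_eq ternary_def f_def by auto

lemma T_sa: "is_suffix_array T P"
proof -
  have H: "T!(a-1) < T!(b-1) \<or> (T!(a-1) = T!(b-1) \<and> (a = length T \<or> (a < length T \<and> b < length T \<and> r (a+1) < r (b+1))))"
    if a: "a \<in> {1..length T}" and b: "b \<in> {1..length T}" and ab: "r a < r b" for a b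
  proof -
    have ta: "T!(a-1) = f (r a)" and tb: "T!(b-1) = f (r b)" using a b T_nth T_len by auto
    have rb: "r b < n" using r_prop b T_len by auto
    show ?thesis
    proof (cases "f (r a) < f (r b)")
      case True then show ?thesis using ta tb by simp
    next
      case False
      then have eq: "f (r a) = f (r b)" using f_mono[of "r a" "r b"] ab by simp
      show ?thesis
      proof (cases "a = n")
        case True then show ?thesis using ta tb eq T_len by simp
      next
        case False
        then have an: "a < n" using a T_len by auto
        have bn: "b \<noteq> n"
        proof
          assume "b = n"
          then have x: "r a \<le> r n - 1" "r n - 1 < r b" using ab rn_pos by auto
          show False using f_block[OF ab eq _ x] cuts(1) by auto
        qed
        then have bn': "b < n" using b T_len by auto
        have ra1: "r (a+1) = (r a + m) mod n" using r_succ an a by auto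
        have rb1: "r (b+1) = (r b + m) mod n" using r_succ bn' b by auto
        have "r (a+1) < r (b+1)"
        proof -
          have "\<not> (r a \<le> n - m - 1 \<and> n - m - 1 < r b)"
            using f_block[OF ab eq, of "n - m - 1"] cuts by auto
          then show ?thesis unfolding ra1 rb1 using mod2[of "r a + m"] mod2[of "r b + m"] ab rb m_prop m_pos
            by auto
        qed
        then show ?thesis using an bn' ta tb eq T_len by simp
      qed
    qed
  qed
  have "ord_class.lexordp (suffix_at T (P ! i)) (suffix_at T (P ! Suc i))" if "Suc i < n" for i
  proof (rule rank_lex[of T r])
    show "P ! i \<in> {1..length T}" "P ! Suc i \<in> {1..length T}" using P_in that T_len by auto
    show "r (P ! i) < r (P ! Suc i)" using pos_nth that by auto
  qed (rule H)
  then show ?thesis unfolding is_suffix_array_def using T_len dist setP by auto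
qed

end

context AP begin

lemma uniq:
  assumes SL: "length S = n" and St: "ternary S" and Ssa: "is_suffix_array S P"
  shows "S = T"
proof -
  define s where "s i = S ! (P ! i - 1)" for i
  have cons: "suffix_at S (P ! i) = s i # suffix_at S (P ! i + 1)" if "i < n" for i
    unfolding s_def using P_in[OF that] SL by (intro suffix_cons) auto
  have step: "ord_class.lexordp (suffix_at S (P ! i)) (suffix_at S (P ! Suc i))" if "Suc i < n" for i
    using Ssa that unfolding is_suffix_array_def by auto
  have le1: "s i \<le> s (Suc i)" if "Suc i < n" for i
    using step[OF that] cons[of i] cons[of "Suc i"] that by auto
  have mono: "s i \<le> s j" if "i \<le> j" "j < n" for i j
    using that
  proof (induction j)
    case 0 then show ?case by simp
  next
    case (Suc j)
    then show ?case using le1[of j] by (cases "i = Suc j") auto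
  qed
  have all: "ord_class.lexordp (suffix_at S (P ! i)) (suffix_at S (P ! j))" if "i < j" "j < n" for i j
    using that
  proof (induction j)
    case 0 then show ?case by simp
  next
    case (Suc j)
    show ?case
    proof (cases "i = j")
      case True then show ?thesis using step Suc by simp
    next
      case False
      then have "ord_class.lexordp (suffix_at S (P ! i)) (suffix_at S (P ! j))" using Suc by auto
      then show ?thesis using step[of j] Suc lexordp_trans by blast
    qed
  qed
  have s2: "s i \<le> 2" if "i < n" for i
  proof -
    have "P ! i - 1 < length S" using P_in[OF that] SL by auto
    then have "s i \<in> set S" unfolding s_def by simp
    then show ?thesis using St unfolding ternary_def by auto
  qed
  have Pi1: "P ! (r n - 1) = n - k" using i1_eq r_prop[of "n - k"] kn k1 by auto
  have Pn: "P ! r n = n" using r_prop[OF n_in] by blast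
  have st1: "s (r n - 1) < s (Suc (r n - 1))"
  proof -
    have sr: "Suc (r n - 1) = r n" using rn_pos by auto
    have "suffix_at S n = [S ! (n - 1)]" using suffix_cons[of n S] suffix_last[of S] SL len by auto
    then have e2: "suffix_at S (P ! Suc (r n - 1)) = [s (Suc (r n - 1))]" unfolding sr s_def Pn by simp
    have "suffix_at S (P ! (r n - 1) + 1) \<noteq> []" unfolding Pi1 using suffix_ne[of "n-k" S] SL k1 kn by auto
    then obtain y ys where e1: "suffix_at S (P ! (r n - 1) + 1) = y # ys" by (meson neq_Nil_conv)
    have "ord_class.lexordp (suffix_at S (P ! (r n - 1))) (suffix_at S (P ! Suc (r n - 1)))"
      using step[of "r n - 1"] sr rn_lt by auto
    then show ?thesis unfolding e2 cons[of "r n - 1", OF _] using rn_lt e1 by (auto simp: cons e1)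
  qed
  have Pi2: "P ! (n - m - 1) = w" using w_r r_prop[OF w_range] by auto
  have Pi2': "P ! Suc (n - m - 1) = p1 - 1"
  proof -
    have "Suc (n - m - 1) = n - m" using m_prop m_pos by auto
    moreover have "p1 - 1 \<in> {1..n}" using p1_range by auto
    ultimately show ?thesis using p1m_r r_prop[of "p1 - 1"] by metis
  qed
  have st2: "s (n - m - 1) < s (Suc (n - m - 1))"
  proof (rule ccontr)
    assume "\<not> ?thesis"
    then have eq: "s (n - m - 1) = s (Suc (n - m - 1))" using le1[of "n - m - 1"] c12 cuts by fastforce
    have lt: "Suc (n - m - 1) < n" using m_pos m_prop by auto
    have "ord_class.lexordp (suffix_at S (P ! (n - m - 1))) (suffix_at S (P ! Suc (n - m - 1)))"
      using step[OF lt] .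
    then have L: "ord_class.lexordp (suffix_at S (w + 1)) (suffix_at S p1)"
      using cons[of "n - m - 1"] cons[of "Suc (n - m - 1)"] lt eq Pi2 Pi2' p1_range by auto
    have wn: "w < n" using w_range w_ne_n by auto
    have w1: "w + 1 \<in> {1..n}" using wn by auto
    have wp: "w + 1 \<noteq> p1"
    proof
      assume "w + 1 = p1"
      then have "w = p1 - 1" by auto
      then have "n - m - 1 = n - m" using w_r p1m_r by auto
      then show False using m_prop m_pos by auto
    qed
    have j0: "r (w + 1) \<noteq> 0" using r_prop[OF w1] wp by (metis)
    have "ord_class.lexordp (suffix_at S (P ! 0)) (suffix_at S (P ! r (w + 1)))"
      using all[of 0 "r (w+1)"] j0 r_prop[OF w1] by auto
    then have "ord_class.lexordp (suffix_at S p1) (suffix_at S (w + 1))" using r_prop[OF w1] by simp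
    then show False using L lexordp_antisym by blast
  qed
  have stc: "s c1 < s (Suc c1)" "s c2 < s (Suc c2)"
    using st1 st2 cuts unfolding c1_def c2_def by (auto simp: min_def max_def)
  have sf: "s i = f i" if "i < n" for i
  proof -
    have a: "s (Suc c1) \<le> s c2" using mono c12 by auto
    have b: "s (Suc c2) \<le> 2" using s2 c12 by auto
    have v: "s c1 = 0" "s (Suc c1) = 1" "s c2 = 1" "s (Suc c2) = 2" using stc a b by auto
    show ?thesis
    proof (cases "i \<le> c1")
      case True then show ?thesis using mono[of i c1] v c12 unfolding f_def by auto
    next
      case F1: False
      show ?thesis
      proof (cases "i \<le> c2")
        case True then show ?thesis using mono[of i c2] mono[of "Suc c1" i] v c12 F1 unfolding f_def by auto
      next
        case False then show ?thesis using mono[of "Suc c2" i] s2[OF that] v c12 F1 that unfolding f_def by auto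
      qed
    qed
  qed
  show ?thesis
  proof (rule nth_equalityI)
    show "length S = length T" using SL T_len by simp
    fix t assume "t < length S"
    then have j: "t + 1 \<in> {1..n}" using SL by auto
    have "S ! t = s (r (t + 1))" unfolding s_def using r_prop[OF j] by simp
    also have "\<dots> = f (r (t + 1))" using sf r_prop[OF j] by blast
    also have "\<dots> = T ! t" using T_nth[OF j] by simp
    finally show "S ! t = T ! t" .
  qed
qed

end

theorem theorem7:
  fixes P :: "nat list" and k :: nat
  assumes "length P \<ge> 2"
    and "arith_prog_perm P k"
    and "hd P \<notin> {1, k + 1, length P}"
  shows "length (assoc_string P k) = length P \<and> ternary (assoc_string P k) \<and>
         is_suffix_array (assoc_string P k) P \<and>
         (\<forall>S. length S = length P \<and> ternary S \<and> is_suffix_array S P \<longrightarrow> S = assoc_string P k)"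
proof -
  interpret AP P k using assms by unfold_locales
  show ?thesis using T_len T_tern T_sa uniq by blast
qed


end
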